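(* Let $f:\mathbb N\to\mathbb N$ be a function, let $(G,d_G)$ be a countable group with a proper left invariant metric which is of growth type at most $f$, and let $(H,d_H)$ be another countable group with a proper left invariant metric. Then: (1) every subset $A\subseteq G$ (with the restricted metric) is of growth type at most $f$; (2) if there is a coarse embedding $H\to G$, then $H$ is of growth type at most $f$; (3) if $G$ is finitely generated, then $G$ has classical growth at most $f$; moreover, the growth type of $G$ exists and coincides with its classical growth.
   Context: A proper left invariant metric is $d(g,h)=\|g^{-1}h\|$ for a proper norm ($\|g\|=0$ iff $g=1$, $\|g\|=\|g^{-1}\|$, subadditive, finite balls). An $s$-scale chain of length $m$ from $x$ to $y$ is $x=x_0,\dots,x_m=y$ with $d(x_i,x_{i+1})<s$. For a metric space $X$, $g\in X$, $s>0$, $n\in\mathbb N$, $A_g^{(n,s)}$ is the set of $h\in X$ joined to $g$ by an $s$-scale chain in $X$ of length $n$, and $gr_{(s,g)}(n)=\#A_g^{(n,s)}$. $u\preceq v$ means there is $C>0$ with $u(x)\le Cv(Cx)$ for large $x$; $u,v$ have the same type if $u\preceq v\preceq u$. $X$ is of growth type at most $f$ if $gr_{(s,g)}\preceq f$ for all $g,s$; its growth type is $f$ if moreover $f\preceq gr_{(s,g)}$ for some $g,s$. For a finitely generated group with a word metric, its classical growth is the type of $n\mapsto\#B(1,n)$. A coarse embedding is a map that is a coarse equivalence onto its image, where $f$ is coarse if for every $\delta>0$ there is $\epsilon>0$ with $d(x,y)\le\delta\Rightarrow d(f(x),f(y))\le\epsilon$. *)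

theory Defs
  imports Complex_Main "HOL-Library.Countable_Set"
begin

text \<open>Groups are modelled by the type class group_add (not necessarily abelian;
  the group operation is written +, the identity 0, inverses -g).\<close>

definition proper_norm :: "('g::group_add \<Rightarrow> real) \<Rightarrow> bool" where
  "proper_norm nrm \<longleftrightarrow>
     (\<forall>g. nrm g = 0 \<longleftrightarrow> g = 0) \<and>
     (\<forall>g. nrm g = nrm (- g)) \<and>
     (\<forall>g h. nrm (g + h) \<le> nrm g + nrm h) \<and>
     (\<forall>r. finite {g. nrm g \<le> r})"

definition norm_metric :: "('g::group_add \<Rightarrow> real) \<Rightarrow> 'g \<Rightarrow> 'g \<Rightarrow> real" where
  "norm_metric nrm g h = nrm (- g + h)"

definition chain_set :: "('a \<Rightarrow> 'a \<Rightarrow> real) \<Rightarrow> 'a set \<Rightarrow> real \<Rightarrow> nat \<Rightarrow> 'a \<Rightarrow> 'a set" where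
  "chain_set d X s n g =
     {h \<in> X. \<exists>x :: nat \<Rightarrow> 'a. x 0 = g \<and> x n = h \<and> (\<forall>i\<le>n. x i \<in> X) \<and>
                       (\<forall>i<n. d (x i) (x (Suc i)) < s)}"

definition gr :: "('a \<Rightarrow> 'a \<Rightarrow> real) \<Rightarrow> 'a set \<Rightarrow> real \<Rightarrow> 'a \<Rightarrow> nat \<Rightarrow> nat" where
  "gr d X s g n = card (chain_set d X s n g)"

definition growth_le :: "(nat \<Rightarrow> nat) \<Rightarrow> (nat \<Rightarrow> nat) \<Rightarrow> bool" where
  "growth_le u v \<longleftrightarrow> (\<exists>C::nat. C > 0 \<and> (\<forall>\<^sub>F x in sequentially. u x \<le> C * v (C * x)))"

definition growth_type_at_most :: "('a \<Rightarrow> 'a \<Rightarrow> real) \<Rightarrow> 'a set \<Rightarrow> (nat \<Rightarrow> nat) \<Rightarrow> bool" where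
  "growth_type_at_most d X f \<longleftrightarrow> (\<forall>g\<in>X. \<forall>s>0. growth_le (gr d X s g) f)"

definition has_growth_type :: "('a \<Rightarrow> 'a \<Rightarrow> real) \<Rightarrow> 'a set \<Rightarrow> (nat \<Rightarrow> nat) \<Rightarrow> bool" where
  "has_growth_type d X f \<longleftrightarrow>
     growth_type_at_most d X f \<and> (\<exists>g\<in>X. \<exists>s>0. growth_le f (gr d X s g))"

definition coarse_map :: "('a \<Rightarrow> 'a \<Rightarrow> real) \<Rightarrow> 'a set \<Rightarrow> ('b \<Rightarrow> 'b \<Rightarrow> real) \<Rightarrow> 'b set
                          \<Rightarrow> ('a \<Rightarrow> 'b) \<Rightarrow> bool" where
  "coarse_map dX X dY Y f \<longleftrightarrow> (\<forall>x\<in>X. f x \<in> Y) \<and>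
     (\<forall>\<delta>>0. \<exists>\<epsilon>>0. \<forall>x\<in>X. \<forall>y\<in>X. dX x y \<le> \<delta> \<longrightarrow> dY (f x) (f y) \<le> \<epsilon>)"

definition coarse_equivalence :: "('a \<Rightarrow> 'a \<Rightarrow> real) \<Rightarrow> 'a set \<Rightarrow> ('b \<Rightarrow> 'b \<Rightarrow> real) \<Rightarrow> 'b set
                          \<Rightarrow> ('a \<Rightarrow> 'b) \<Rightarrow> bool" where
  "coarse_equivalence dX X dY Y f \<longleftrightarrow> coarse_map dX X dY Y f \<and>
     (\<exists>g. coarse_map dY Y dX X g \<and>
          (\<exists>C. \<forall>x\<in>X. dX (g (f x)) x \<le> C) \<and>
          (\<exists>C. \<forall>y\<in>Y. dY (f (g y)) y \<le> C))"

definition coarse_embedding :: "('a \<Rightarrow> 'a \<Rightarrow> real) \<Rightarrow> 'a set \<Rightarrow> ('b \<Rightarrow> 'b \<Rightarrow> real) \<Rightarrow> 'b set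
                          \<Rightarrow> ('a \<Rightarrow> 'b) \<Rightarrow> bool" where
  "coarse_embedding dX X dY Y f \<longleftrightarrow> (\<forall>x\<in>X. f x \<in> Y) \<and> coarse_equivalence dX X dY (f ` X) f"

definition generates :: "'g::group_add set \<Rightarrow> bool" where
  "generates S \<longleftrightarrow> (\<forall>h. \<exists>xs. set xs \<subseteq> S \<union> uminus ` S \<and> sum_list xs = h)"

definition word_ball :: "'g::group_add set \<Rightarrow> nat \<Rightarrow> 'g set" where
  "word_ball S n = {h. \<exists>xs. length xs \<le> n \<and> set xs \<subseteq> S \<union> uminus ` S \<and> sum_list xs = h}"

definition word_growth :: "'g::group_add set \<Rightarrow> nat \<Rightarrow> nat" where
  "word_growth S n = card (word_ball S n)"

end

theory Submission
  imports Defs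
begin

lemma pn_zero: "proper_norm nrm \<Longrightarrow> nrm 0 = 0"
  unfolding proper_norm_def by blast

lemma pn_nonneg: assumes "proper_norm nrm" shows "nrm g \<ge> 0"
proof -
  have "nrm (g + - g) \<le> nrm g + nrm (- g)" using assms unfolding proper_norm_def by blast
  moreover have "nrm (- g) = nrm g" using assms unfolding proper_norm_def by metis
  ultimately show ?thesis using pn_zero[OF assms] by simp
qed

lemma pn_ball_finite: assumes "proper_norm nrm" shows "finite {h. nrm (- g + h) \<le> r}"
proof -
  have "{h. nrm (- g + h) \<le> r} \<subseteq> (\<lambda>k. g + k) ` {k. nrm k \<le> r}"
  proof
    fix h assume "h \<in> {h. nrm (- g + h) \<le> r}"
    then show "h \<in> (\<lambda>k. g + k) ` {k. nrm k \<le> r}"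
      by (intro image_eqI[where x="- g + h"]) (auto simp: add_minus_cancel)
  qed
  moreover have "finite {k. nrm k \<le> r}" using assms unfolding proper_norm_def by blast
  ultimately show ?thesis using finite_subset by blast
qed

lemma chain_bound:
  assumes pn: "proper_norm nrm" and x0: "x 0 = g"
    and st: "\<forall>i<n. norm_metric nrm (x i) (x (Suc i)) < s"
  shows "i \<le> n \<Longrightarrow> nrm (- g + x i) \<le> real i * s"
proof (induction i)
  case 0 then show ?case using x0 pn_zero[OF pn] by simp
next
  case (Suc i)
  have "- g + x (Suc i) = (- g + x i) + (- x i + x (Suc i))"
    by (simp add: add.assoc add_minus_cancel)
  then have "nrm (- g + x (Suc i)) \<le> nrm (- g + x i) + nrm (- x i + x (Suc i))"
    using pn unfolding proper_norm_def by metis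
  moreover have "nrm (- x i + x (Suc i)) < s" using st Suc.prems
    unfolding norm_metric_def by auto
  ultimately show ?case using Suc by (simp add: algebra_simps)
qed

lemma chain_finite: assumes pn: "proper_norm nrm"
  shows "finite (chain_set (norm_metric nrm) X s n g)"
proof -
  have "chain_set (norm_metric nrm) X s n g \<subseteq> {h. nrm (- g + h) \<le> real n * s}"
    unfolding chain_set_def using chain_bound[OF pn] by blast
  then show ?thesis using pn_ball_finite[OF pn] finite_subset by blast
qed

lemma chain_mono_X: "X \<subseteq> Y \<Longrightarrow> chain_set d X s n g \<subseteq> chain_set d Y s n g"
  unfolding chain_set_def by blast

lemma chain_mono_n:
  assumes pn: "proper_norm nrm" and s: "s > 0" and mn: "m \<le> n"
  shows "chain_set (norm_metric nrm) X s m g \<subseteq> chain_set (norm_metric nrm) X s n g"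
proof
  fix h assume "h \<in> chain_set (norm_metric nrm) X s m g"
  then obtain x where x: "h \<in> X" "x 0 = g" "x m = h" "\<forall>i\<le>m. x i \<in> X"
    "\<forall>i<m. norm_metric nrm (x i) (x (Suc i)) < s" unfolding chain_set_def by blast
  define y where "y i = x (min i m)" for i
  have "\<forall>i<n. norm_metric nrm (y i) (y (Suc i)) < s"
  proof (intro allI impI)
    fix i assume "i < n"
    show "norm_metric nrm (y i) (y (Suc i)) < s"
    proof (cases "i < m")
      case True then show ?thesis using x(5) by (simp add: y_def)
    next
      case False then show ?thesis using s pn_zero[OF pn]
        by (simp add: y_def norm_metric_def)
    qed
  qed
  moreover have "\<forall>i\<le>n. y i \<in> X" using x(4) by (simp add: y_def)
  ultimately show "h \<in> chain_set (norm_metric nrm) X s n g"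
    unfolding chain_set_def using x mn by (auto simp: y_def intro!: exI[where x=y])
qed

lemma gl_trans:
  assumes "\<forall>\<^sub>F n in sequentially. u n \<le> K * v (K * n)" "K > 0" "growth_le v f"
  shows "growth_le u f"
proof -
  obtain C :: nat where C: "C > 0" "\<forall>\<^sub>F x in sequentially. v x \<le> C * f (C * x)"
    using assms(3) unfolding growth_le_def by blast
  obtain N where N: "\<And>x. x \<ge> N \<Longrightarrow> v x \<le> C * f (C * x)"
    using C(2) unfolding eventually_sequentially by blast
  obtain M where M: "\<And>n. n \<ge> M \<Longrightarrow> u n \<le> K * v (K * n)"
    using assms(1) unfolding eventually_sequentially by blast
  have "u n \<le> (K * C) * f ((K * C) * n)" if "n \<ge> max N M" for n
  proof -
    have "K * n \<ge> N" using that assms(2) using le_trans max.boundedE mult_le_mono1 by (metis nat_mult_1 One_nat_def Suc_leI)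
    then have "v (K * n) \<le> C * f (C * (K * n))" by (rule N)
    then have "K * v (K * n) \<le> K * (C * f (C * (K * n)))" by simp
    moreover have "u n \<le> K * v (K * n)" using M that by simp
    ultimately have "u n \<le> K * (C * f (C * (K * n)))" by linarith
    then show ?thesis by (simp add: mult.assoc mult.left_commute)
  qed
  then show ?thesis unfolding growth_le_def eventually_sequentially
    using assms(2) C(1) by (intro exI[where x="K*C"]) (auto intro!: exI[where x="max N M"])
qed


lemma ball_translate: fixes nrm :: "'g::group_add \<Rightarrow> real" shows "{h. nrm (- a + h) \<le> r} = (\<lambda>k. a + k) ` {k. nrm k \<le> r}"
proof
  show "{h. nrm (- a + h) \<le> r} \<subseteq> (\<lambda>k. a + k) ` {k. nrm k \<le> r}"
  proof
    fix h assume "h \<in> {h. nrm (- a + h) \<le> r}"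
    moreover have "h = a + (- a + h)" by (simp only: add_minus_cancel)
    ultimately show "h \<in> (\<lambda>k. a + k) ` {k. nrm k \<le> r}"
      by (intro image_eqI[where x="- a + h"]) auto
  qed
next
  show "(\<lambda>k. a + k) ` {k. nrm k \<le> r} \<subseteq> {h. nrm (- a + h) \<le> r}"
    by (auto simp only: minus_add_cancel image_iff mem_Collect_eq subset_iff)
qed

lemma card_translate: fixes nrm :: "'g::group_add \<Rightarrow> real" shows "card {h. nrm (- a + h) \<le> r} = card {k. nrm k \<le> r}"
proof -
  have "inj_on (\<lambda>k. a + k) {k. nrm k \<le> r}"
  proof (rule inj_onI)
    fix x y assume "a + x = a + y"
    then have "- a + (a + x) = - a + (a + y)" by simp
    then show "x = y" by (simp only: minus_add_cancel)
  qed
  then show ?thesis unfolding ball_translate by (rule card_image)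
qed

lemma part1:
  assumes pn: "proper_norm nG" and gt: "growth_type_at_most (norm_metric nG) UNIV f"
  shows "growth_type_at_most (norm_metric nG) A f"
  unfolding growth_type_at_most_def
proof (intro ballI allI impI)
  fix g s assume "g \<in> A" "(s::real) > 0"
  have "growth_le (gr (norm_metric nG) UNIV s g) f" using gt \<open>s > 0\<close>
    unfolding growth_type_at_most_def by blast
  moreover have "\<forall>\<^sub>F n in sequentially. gr (norm_metric nG) A s g n \<le> 1 * gr (norm_metric nG) UNIV s g (1 * n)"
  proof (intro always_eventually allI)
    fix n
    have "card (chain_set (norm_metric nG) A s n g) \<le> card (chain_set (norm_metric nG) UNIV s n g)"
      by (rule card_mono[OF chain_finite[OF pn] chain_mono_X]) simp
    then show "gr (norm_metric nG) A s g n \<le> 1 * gr (norm_metric nG) UNIV s g (1 * n)"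
      unfolding gr_def by simp
  qed
  ultimately show "growth_le (gr (norm_metric nG) A s g) f"
    using gl_trans[where K=1 and v="gr (norm_metric nG) UNIV s g"] by simp
qed

lemma part2:
  assumes pnH: "proper_norm nH" and pnG: "proper_norm nG"
    and ce: "coarse_embedding (norm_metric nH) UNIV (norm_metric nG) UNIV \<phi>"
    and gt: "growth_type_at_most (norm_metric nG) UNIV f"
  shows "growth_type_at_most (norm_metric nH) UNIV f"
  unfolding growth_type_at_most_def
proof (intro ballI allI impI)
  fix h and s :: real assume "s > 0"
  let ?dH = "norm_metric nH" and ?dG = "norm_metric nG"
  have cm: "coarse_map ?dH UNIV ?dG (range \<phi>) \<phi>" and
    "\<exists>\<psi>. coarse_map ?dG (range \<phi>) ?dH UNIV \<psi> \<and> (\<exists>C. \<forall>x\<in>UNIV. ?dH (\<psi> (\<phi> x)) x \<le> C) \<and>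
          (\<exists>C. \<forall>y\<in>range \<phi>. ?dG (\<phi> (\<psi> y)) y \<le> C)"
    using ce unfolding coarse_embedding_def coarse_equivalence_def by simp_all
  then obtain \<psi> C where C: "\<And>x. ?dH (\<psi> (\<phi> x)) x \<le> C" by blast
  obtain \<epsilon> where eps: "\<epsilon> > 0" "\<And>x y. ?dH x y \<le> s \<Longrightarrow> ?dG (\<phi> x) (\<phi> y) \<le> \<epsilon>"
    using cm \<open>s > 0\<close> unfolding coarse_map_def by blast
  define Kc where "Kc = card {k. nH k \<le> C}"
  have pw: "gr ?dH UNIV s h n \<le> Kc * gr ?dG UNIV (\<epsilon>+1) (\<phi> h) n" for n
  proof -
    define T where "T = chain_set ?dH UNIV s n h"
    define U where "U = chain_set ?dG UNIV (\<epsilon>+1) n (\<phi> h)"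
    have finU: "finite U" unfolding U_def by (rule chain_finite[OF pnG])
    have sub: "\<phi> ` T \<subseteq> U"
    proof
      fix y assume "y \<in> \<phi> ` T"
      then obtain z x where z: "y = \<phi> z" "x 0 = h" "x n = z"
        "\<forall>i<n. ?dH (x i) (x (Suc i)) < s" unfolding T_def chain_set_def by blast
      have "\<forall>i<n. ?dG ((\<phi> \<circ> x) i) ((\<phi> \<circ> x) (Suc i)) < \<epsilon> + 1"
      proof (intro allI impI)
        fix i assume "i < n"
        then have "?dG (\<phi> (x i)) (\<phi> (x (Suc i))) \<le> \<epsilon>" using z(4) eps(2) less_imp_le by blast
        then show "?dG ((\<phi> \<circ> x) i) ((\<phi> \<circ> x) (Suc i)) < \<epsilon> + 1" by simp
      qed
      then show "y \<in> U" unfolding U_def chain_set_def using z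
        by (auto intro!: exI[where x="\<phi> \<circ> x"])
    qed
    have finI: "finite (\<phi> ` T)" using finU sub finite_subset by blast
    have T_sub: "T \<subseteq> (\<Union>y\<in>\<phi> ` T. {x. nH (- (\<psi> y) + x) \<le> C})"
    proof
      fix x assume "x \<in> T"
      moreover have "nH (- (\<psi> (\<phi> x)) + x) \<le> C" using C[of x] unfolding norm_metric_def .
      ultimately show "x \<in> (\<Union>y\<in>\<phi> ` T. {x. nH (- (\<psi> y) + x) \<le> C})" by blast
    qed
    have "card T \<le> card (\<Union>y\<in>\<phi> ` T. {x. nH (- (\<psi> y) + x) \<le> C})"
      by (rule card_mono[OF _ T_sub]) (intro finite_UN_I finI pn_ball_finite[OF pnH])
    also have "\<dots> \<le> (\<Sum>y\<in>\<phi> ` T. card {x. nH (- (\<psi> y) + x) \<le> C})"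
      by (rule card_UN_le[OF finI])
    also have "\<dots> = card (\<phi> ` T) * Kc" by (simp add: card_translate Kc_def)
    also have "\<dots> \<le> card U * Kc" using card_mono[OF finU sub] by simp
    finally show ?thesis unfolding gr_def T_def U_def by (simp add: mult.commute)
  qed
  define K where "K = Kc + 1"
  have bnd: "gr ?dH UNIV s h n \<le> K * gr ?dG UNIV (\<epsilon>+1) (\<phi> h) (K * n)" for n
  proof -
    have "gr ?dG UNIV (\<epsilon>+1) (\<phi> h) n \<le> gr ?dG UNIV (\<epsilon>+1) (\<phi> h) (K * n)"
      unfolding gr_def K_def
      by (rule card_mono[OF chain_finite[OF pnG] chain_mono_n[OF pnG]]) (use eps in auto)
    then have "Kc * gr ?dG UNIV (\<epsilon>+1) (\<phi> h) n \<le> K * gr ?dG UNIV (\<epsilon>+1) (\<phi> h) (K * n)"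
      unfolding K_def by (intro mult_le_mono) auto
    then show ?thesis using pw[of n] by linarith
  qed
  have gG: "growth_le (gr ?dG UNIV (\<epsilon>+1) (\<phi> h)) f"
    using gt eps(1) unfolding growth_type_at_most_def by simp
  have ev: "\<forall>\<^sub>F n in sequentially. gr ?dH UNIV s h n \<le> K * gr ?dG UNIV (\<epsilon>+1) (\<phi> h) (K * n)"
    using bnd by (intro always_eventually allI) blast
  show "growth_le (gr ?dH UNIV s h) f"
    by (rule gl_trans[OF ev _ gG]) (simp add: K_def)
qed


lemma word_ball_finite: assumes "finite S" shows "finite (word_ball S n)"
proof -
  have "word_ball S n = sum_list ` {xs. set xs \<subseteq> S \<union> uminus ` S \<and> length xs \<le> n}"
    unfolding word_ball_def by auto
  moreover have "finite {xs. set xs \<subseteq> S \<union> uminus ` S \<and> length xs \<le> n}"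
    using assms by (intro finite_lists_length_le) auto
  ultimately show ?thesis by simp
qed

lemma word_ball_mono: "m \<le> n \<Longrightarrow> word_ball S m \<subseteq> word_ball S n"
  unfolding word_ball_def by force

lemma word_ball_add:
  assumes "a \<in> word_ball S m" "b \<in> word_ball S k"
  shows "a + b \<in> word_ball S (m + k)"
proof -
  obtain xs where xs: "length xs \<le> m" "set xs \<subseteq> S \<union> uminus ` S" "sum_list xs = a"
    using assms(1) unfolding word_ball_def by blast
  obtain ys where ys: "length ys \<le> k" "set ys \<subseteq> S \<union> uminus ` S" "sum_list ys = b"
    using assms(2) unfolding word_ball_def by blast
  show ?thesis unfolding word_ball_def
    using xs ys by (intro CollectI exI[where x="xs @ ys"]) auto
qed

lemma cover_finite:
  assumes "finite B" "generates S"
  shows "\<exists>k\<ge>1. \<forall>b\<in>B. b \<in> word_ball S k"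
  using assms(1)
proof (induction B rule: finite_induct)
  case empty then show ?case by auto
next
  case (insert b B)
  then obtain k where k: "k \<ge> 1" "\<forall>c\<in>B. c \<in> word_ball S k" by blast
  obtain xs where xs: "set xs \<subseteq> S \<union> uminus ` S" "sum_list xs = b"
    using assms(2) unfolding generates_def by blast
  have "b \<in> word_ball S (max k (length xs))" unfolding word_ball_def using xs
    by (intro CollectI exI[where x=xs]) auto
  moreover have "\<forall>c\<in>B. c \<in> word_ball S (max k (length xs))"
    using k(2) word_ball_mono[of k "max k (length xs)" S] by auto
  ultimately show ?case using k(1) by (intro exI[where x="max k (length xs)"]) auto
qed

lemma chain_in_word_ball:
  assumes pn: "proper_norm nrm" and fin: "finite S" and gen: "generates S"
  shows "\<exists>k\<ge>1. \<forall>n g. chain_set (norm_metric nrm) UNIV s n g \<subseteq> (\<lambda>z. g + z) ` word_ball S (k * n)"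
proof -
  have "finite {b. nrm b \<le> s}" using pn unfolding proper_norm_def by blast
  then have "finite {b. nrm b < s}" by (rule finite_subset[rotated]) auto
  then obtain k where k: "k \<ge> 1" "\<forall>b\<in>{b. nrm b < s}. b \<in> word_ball S k"
    using cover_finite[OF _ gen] by blast
  have "chain_set (norm_metric nrm) UNIV s n g \<subseteq> (\<lambda>z. g + z) ` word_ball S (k * n)" for n g
  proof
    fix h assume "h \<in> chain_set (norm_metric nrm) UNIV s n g"
    then obtain x where x: "x 0 = g" "x n = h" "\<forall>i<n. norm_metric nrm (x i) (x (Suc i)) < s"
      unfolding chain_set_def by blast
    have "i \<le> n \<Longrightarrow> - g + x i \<in> word_ball S (k * i)" for i
    proof (induction i)
      case 0
      have "(0::'a) \<in> word_ball S 0" unfolding word_ball_def by (intro CollectI exI[where x="[]"]) simp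
      then show ?case using x(1) by simp
    next
      case (Suc i)
      have e: "- g + x (Suc i) = (- g + x i) + (- x i + x (Suc i))"
        by (simp add: add.assoc)
      have "- x i + x (Suc i) \<in> word_ball S k" using k(2) x(3) Suc.prems
        unfolding norm_metric_def by auto
      then have "(- g + x i) + (- x i + x (Suc i)) \<in> word_ball S (k * i + k)"
        using Suc by (intro word_ball_add) auto
      then show ?case using e by (simp add: add.commute)
    qed
    from this[of n] have "- g + h \<in> word_ball S (k * n)" using x(2) by simp
    moreover have "h = g + (- g + h)" by (simp add: add.assoc[symmetric])
    ultimately show "h \<in> (\<lambda>z. g + z) ` word_ball S (k * n)" by blast
  qed
  then show ?thesis using k(1) by blast
qed

lemma word_ball_in_chain:
  assumes pn: "proper_norm nrm" and fin: "finite S"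
  defines "s0 \<equiv> 1 + (\<Sum>x\<in>S. nrm x)"
  shows "word_ball S n \<subseteq> chain_set (norm_metric nrm) UNIV s0 n 0"
proof
  fix h assume "h \<in> word_ball S n"
  then obtain xs where xs: "length xs \<le> n" "set xs \<subseteq> S \<union> uminus ` S" "sum_list xs = h"
    unfolding word_ball_def by blast
  have s0pos: "s0 > 0" unfolding s0_def using sum_nonneg[of S nrm] pn_nonneg[OF pn] by force
  have small: "nrm b < s0" if bS: "b \<in> S \<union> uminus ` S" for b
  proof -
    have "\<exists>c. c \<in> S \<and> nrm b = nrm c"
    proof (cases "b \<in> S")
      case True then show ?thesis by blast
    next
      case False
      then obtain c where "c \<in> S" "b = - c" using bS by blast
      moreover have "nrm c = nrm (- c)" using pn unfolding proper_norm_def by blast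
      ultimately show ?thesis by auto
    qed
    then obtain c where c: "c \<in> S" "nrm b = nrm c" by blast
    have "nrm c \<le> (\<Sum>x\<in>S. nrm x)"
      using c(1) fin pn_nonneg[OF pn] by (intro member_le_sum) auto
    then show ?thesis using c(2) unfolding s0_def by simp
  qed
  define x where "x i = sum_list (take i xs)" for i
  have step: "norm_metric nrm (x i) (x (Suc i)) < s0" for i
  proof (cases "i < length xs")
    case True
    then have "x (Suc i) = x i + xs ! i" unfolding x_def by (simp add: take_Suc_conv_app_nth)
    then have "norm_metric nrm (x i) (x (Suc i)) = nrm (xs ! i)"
      unfolding norm_metric_def by (simp add: add.assoc[symmetric])
    moreover have "xs ! i \<in> S \<union> uminus ` S" using True xs(2) nth_mem by blast
    ultimately show ?thesis using small by simp
  next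
    case False
    then have "x (Suc i) = x i" unfolding x_def by simp
    then show ?thesis using s0pos pn_zero[OF pn] unfolding norm_metric_def by simp
  qed
  have "x 0 = 0" "x n = h" using xs unfolding x_def by auto
  then show "h \<in> chain_set (norm_metric nrm) UNIV s0 n 0"
    unfolding chain_set_def using step by (intro CollectI conjI exI[where x=x]) auto
qed


lemma part3:
  fixes nG :: "'g::group_add \<Rightarrow> real" and S :: "'g set"
  assumes pn: "proper_norm nG" and gt: "growth_type_at_most (norm_metric nG) UNIV f"
    and fin: "finite S" and gen: "generates S"
  shows "growth_le (word_growth S) f \<and> has_growth_type (norm_metric nG) UNIV (word_growth S)"
proof -
  define s0 where "s0 = 1 + (\<Sum>x\<in>S. nG x)"
  have s0pos: "s0 > 0" unfolding s0_def using sum_nonneg[of S nG] pn_nonneg[OF pn] by force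
  have low: "word_growth S n \<le> gr (norm_metric nG) UNIV s0 0 n" for n
    unfolding word_growth_def gr_def s0_def
    by (rule card_mono[OF chain_finite[OF pn] word_ball_in_chain[OF pn fin]])
  have gl_low: "growth_le (word_growth S) (gr (norm_metric nG) UNIV s0 0)"
    unfolding growth_le_def using low by (intro exI[where x=1]) simp
  have g0: "growth_le (gr (norm_metric nG) UNIV s0 0) f"
    using gt s0pos unfolding growth_type_at_most_def by simp
  have ev1: "\<forall>\<^sub>F n in sequentially. word_growth S n \<le> 1 * gr (norm_metric nG) UNIV s0 0 (1 * n)"
    using low by (intro always_eventually allI) simp
  have A: "growth_le (word_growth S) f"
    by (rule gl_trans[OF ev1 _ g0]) simp
  have B: "growth_type_at_most (norm_metric nG) UNIV (word_growth S)"
    unfolding growth_type_at_most_def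
  proof (intro ballI allI impI)
    fix g and s :: real assume "s > 0"
    obtain k where k: "k \<ge> 1"
      "\<And>n g. chain_set (norm_metric nG) UNIV s n g \<subseteq> (\<lambda>z. g + z) ` word_ball S (k * n)"
      using chain_in_word_ball[OF pn fin gen, of s] by blast
    have "gr (norm_metric nG) UNIV s g n \<le> k * word_growth S (k * n)" for n
    proof -
      have "gr (norm_metric nG) UNIV s g n \<le> card ((\<lambda>z. g + z) ` word_ball S (k * n))"
        unfolding gr_def by (rule card_mono[OF finite_imageI[OF word_ball_finite[OF fin]] k(2)])
      also have "\<dots> \<le> word_growth S (k * n)" unfolding word_growth_def by (rule card_image_le[OF word_ball_finite[OF fin]])
      also have "\<dots> \<le> k * word_growth S (k * n)" using k(1) by simp
      finally show ?thesis .
    qed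
    then show "growth_le (gr (norm_metric nG) UNIV s g) (word_growth S)"
      unfolding growth_le_def using k(1) by (intro exI[where x=k]) auto
  qed
  have "has_growth_type (norm_metric nG) UNIV (word_growth S)"
    unfolding has_growth_type_def using B gl_low s0pos by blast
  then show ?thesis using A by blast
qed

theorem mainTheorem8:
  fixes f :: "nat \<Rightarrow> nat"
    and nG :: "'g::group_add \<Rightarrow> real"
    and nH :: "'h::group_add \<Rightarrow> real"
  assumes "countable (UNIV :: 'g set)" and "countable (UNIV :: 'h set)"
    and "proper_norm nG" and "proper_norm nH"
    and "growth_type_at_most (norm_metric nG) UNIV f"
  shows "(\<forall>A :: 'g set. growth_type_at_most (norm_metric nG) A f)
       \<and> ((\<exists>\<phi> :: 'h \<Rightarrow> 'g. coarse_embedding (norm_metric nH) UNIV (norm_metric nG) UNIV \<phi>)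
            \<longrightarrow> growth_type_at_most (norm_metric nH) UNIV f)
       \<and> ((\<exists>S :: 'g set. finite S \<and> generates S) \<longrightarrow>
            (\<forall>S :: 'g set. finite S \<and> generates S \<longrightarrow>
                growth_le (word_growth S) f \<and>
                has_growth_type (norm_metric nG) UNIV (word_growth S)))"
  using part1[OF assms(3,5)] part2[OF assms(4,3) _ assms(5)] part3[OF assms(3,5)] by blast

end
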